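(* Let $\mu_1,\mu_2$, $P_{n,m}$, the shifted step-line polynomials $p_n^{(0,k)}$, their recurrence coefficients $\beta_n^{(0,k)},\gamma_n^{(0,k)},\delta_n^{(0,k)}$ and the numbers $c_n^{(0,k)}$ be as in the context. Then for all $k\ge 0$: \begin{align*} \beta_{2n+k}^{(0,k+1)} &= \beta_{2n+k}^{(0,k)} + c_n^{(0,k)}, && n\ge 0,\\ \gamma_{2n+k}^{(0,k+1)} &= \gamma_{2n+k}^{(0,k)}, && n\ge 1,\\ \delta_{2n+k}^{(0,k+1)} &= \delta_{2n+k}^{(0,k)} + c_{n-1}^{(0,k)}\gamma_{2n+k}^{(0,k)}, && n\ge 1, \end{align*} and \begin{align*} \beta_{2n+k+1}^{(0,k+1)} &= \beta_{2n+k+1}^{(0,k)} - c_n^{(0,k)}, && n\ge 0,\\ \gamma_{2n+k+1}^{(0,k+1)} &= \gamma_{2n+k+1}^{(0,k)} - c_n^{(0,k)}\bigl(\beta_{2n+k}^{(0,k)}-\beta_{2n+k+1}^{(0,k+1)}\bigr), && n\ge 0,\\ \delta_{2n+k+1}^{(0,k+1)} &= \delta_{2n+k+1}^{(0,k)} - c_n^{(0,k)}\gamma_{2n+k}^{(0,k)}, && n\ge 1, \end{align*} where $(c_n^{(0,k)})_{n\ge 0}$ is the solution of the Riccati type difference equation \[ c_n^{(0,k)} = \frac{c_{n-1}^{(0,k)}\,\delta_{2n+k+1}^{(0,k)}}{\delta_{2n+k}^{(0,k)} + c_{n-1}^{(0,k)}\gamma_{2n+k}^{(0,k)}}, \qquad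 n\ge 1, \] with initial condition $c_0^{(0,k)} = \delta_{k+1}^{(0,k)}/\gamma_k^{(0,k)}$ for $k\ge 1$, while for $k=0$ the value $c_0^{(0,0)}$ is a free parameter (not given by such a formula).
   Context: Let $\mu_1,\mu_2$ be positive Borel measures on $\mathbb{R}$ with all moments finite, forming a normal system: for every $(n,m)\in\mathbb{N}^2$ ($\mathbb{N}=\{0,1,2,\dots\}$) there is a unique monic polynomial $P_{n,m}$ of degree $n+m$ with $\int x^k P_{n,m}(x)\,d\mu_1(x)=0$ for $0\le k\le n-1$ and $\int x^k P_{n,m}(x)\,d\mu_2(x)=0$ for $0\le k\le m-1$. Set $P_{n,m}=0$ if $n<0$ or $m<0$. For $k\ge 0$ define the shifted step-line polynomials $p_{2n+k}^{(0,k)}=P_{n,n+k}$ and $p_{2n+k+1}^{(0,k)}=P_{n+1,n+k}$ for $n\ge -1$ (with the convention above, so $p_{k-1}^{(0,k)}=P_{0,k-1}$ and $p_{k-2}^{(0,k)}=0$). For $n\ge k$ they satisfy the four-term recurrence \[ x p_n^{(0,k)}(x) = p_{n+1}^{(0,k)}(x) + \beta_n^{(0,k)} p_n^{(0,k)}(x) + \gamma_n^{(0,k)} p_{n-1}^{(0,k)}(x) + \delta_n^{(0,k)} p_{n-2}^{(0,k)}(x), \] which defines the real numbers $\beta_n^{(0,k)},\gamma_n^{(0,k)},\delta_n^{(0,k)}$ for $n\ge k$ (coefficients multiplying the zero polynomial are set to $0$). In addition, for $k\ge 0$, $\beta_k^{(0,k+1)}$ denotes the constant such that $xP_{0,k}(x)-P_{0,k+1}(x)-\beta_k^{(0,k+1)}P_{0,k}(x)$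 has degree less than $k$. For $k=0$ one gets the step-line polynomials $p_{2n}=P_{n,n}$, $p_{2n+1}=P_{n+1,n}$ with coefficients $\beta_n=\beta_n^{(0,0)}$, $\gamma_n=\gamma_n^{(0,0)}$, $\delta_n=\delta_n^{(0,0)}$. For $k\ge 0$ and $n\ge 0$, $c_n^{(0,k)}$ denotes the constant such that $P_{n+1,n+k}(x)-P_{n,n+k+1}(x)=c_n^{(0,k)}P_{n,n+k}(x)$ (such a constant exists). *)

theory Defs
  imports "HOL-Analysis.Analysis" "HOL-Computational_Algebra.Polynomial"
begin

definition moments_finite :: "real measure \<Rightarrow> bool" where
  "moments_finite \<mu> \<longleftrightarrow> (\<forall>k::nat. integrable \<mu> (\<lambda>x. x ^ k))"

definition is_mop :: "real measure \<Rightarrow> real measure \<Rightarrow> nat \<Rightarrow> nat \<Rightarrow> real poly \<Rightarrow> bool" where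
  "is_mop \<mu>1 \<mu>2 n m P \<longleftrightarrow> lead_coeff P = 1 \<and> degree P = n + m
     \<and> (\<forall>k<n. (\<integral>x. x ^ k * poly P x \<partial>\<mu>1) = 0)
     \<and> (\<forall>k<m. (\<integral>x. x ^ k * poly P x \<partial>\<mu>2) = 0)"

definition normal_system :: "real measure \<Rightarrow> real measure \<Rightarrow> bool" where
  "normal_system \<mu>1 \<mu>2 \<longleftrightarrow> (\<forall>n m. \<exists>!P. is_mop \<mu>1 \<mu>2 n m P)"

definition mop :: "real measure \<Rightarrow> real measure \<Rightarrow> int \<Rightarrow> int \<Rightarrow> real poly" where
  "mop \<mu>1 \<mu>2 n m = (if n < 0 \<or> m < 0 then 0 else (THE P. is_mop \<mu>1 \<mu>2 (nat n) (nat m) P))"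

text \<open>Shifted step-line polynomials p_j^{(0,k)}: p_{2n+k} = P_{n,n+k}, p_{2n+k+1} = P_{n+1,n+k}
  (meaningful for j \<ge> k - 2).\<close>
definition slp :: "real measure \<Rightarrow> real measure \<Rightarrow> nat \<Rightarrow> int \<Rightarrow> real poly" where
  "slp \<mu>1 \<mu>2 k j = (let t = j - int k in
      if even t then mop \<mu>1 \<mu>2 (t div 2) (t div 2 + int k)
      else mop \<mu>1 \<mu>2 (t div 2 + 1) (t div 2 + int k))"

text \<open>Recurrence coefficients (beta, gamma, delta) of the four-term recurrence, for n \<ge> k;
  coefficients multiplying the zero polynomial are 0.\<close>
definition rec_coeffs :: "real measure \<Rightarrow> real measure \<Rightarrow> nat \<Rightarrow> nat \<Rightarrow> real \<times> real \<times> real" where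
  "rec_coeffs \<mu>1 \<mu>2 k n = (THE (b, g, d).
      [:0, 1:] * slp \<mu>1 \<mu>2 k (int n) =
        slp \<mu>1 \<mu>2 k (int n + 1) + smult b (slp \<mu>1 \<mu>2 k (int n))
        + smult g (slp \<mu>1 \<mu>2 k (int n - 1)) + smult d (slp \<mu>1 \<mu>2 k (int n - 2))
      \<and> (slp \<mu>1 \<mu>2 k (int n - 1) = 0 \<longrightarrow> g = 0)
      \<and> (slp \<mu>1 \<mu>2 k (int n - 2) = 0 \<longrightarrow> d = 0))"

text \<open>beta_n^{(0,k)}: for n \<ge> k from the recurrence; for n = k - 1 (k \<ge> 1) the special constant
  beta_{k-1}^{(0,k)} such that x P_{0,k-1} - P_{0,k} - beta P_{0,k-1} has degree < k - 1.\<close>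
definition beta :: "real measure \<Rightarrow> real measure \<Rightarrow> nat \<Rightarrow> nat \<Rightarrow> real" where
  "beta \<mu>1 \<mu>2 k n = (if k \<le> n then fst (rec_coeffs \<mu>1 \<mu>2 k n)
     else if Suc n = k then
       (THE b. let r = [:0, 1:] * mop \<mu>1 \<mu>2 0 (int n) - mop \<mu>1 \<mu>2 0 (int n + 1)
                        - smult b (mop \<mu>1 \<mu>2 0 (int n))
               in r = 0 \<or> degree r < n)
     else 0)"

definition gamma :: "real measure \<Rightarrow> real measure \<Rightarrow> nat \<Rightarrow> nat \<Rightarrow> real" where
  "gamma \<mu>1 \<mu>2 k n = fst (snd (rec_coeffs \<mu>1 \<mu>2 k n))"

definition delta :: "real measure \<Rightarrow> real measure \<Rightarrow> nat \<Rightarrow> nat \<Rightarrow> real" where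
  "delta \<mu>1 \<mu>2 k n = snd (snd (rec_coeffs \<mu>1 \<mu>2 k n))"

definition cc :: "real measure \<Rightarrow> real measure \<Rightarrow> nat \<Rightarrow> nat \<Rightarrow> real" where
  "cc \<mu>1 \<mu>2 k n = (THE c. mop \<mu>1 \<mu>2 (int n + 1) (int n + int k) - mop \<mu>1 \<mu>2 (int n) (int n + int k + 1)
                      = smult c (mop \<mu>1 \<mu>2 (int n) (int n + int k)))"

end

theory Submission imports Defs begin

definition Ij :: "real measure \<Rightarrow> nat \<Rightarrow> real poly \<Rightarrow> real" where
  "Ij \<mu> j q = (\<integral>x. x ^ j * poly q x \<partial>\<mu>)"

lemma integrable_poly:
  assumes "moments_finite \<mu>" shows "integrable \<mu> (\<lambda>x. poly p x)"
proof -
  have "integrable \<mu> (\<lambda>x. \<Sum>i\<le>degree p. coeff p i * x ^ i)"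
  proof (rule Bochner_Integration.integrable_sum)
    fix i assume "i \<in> {..degree p}" show "integrable \<mu> (\<lambda>x. coeff p i * x ^ i)"
      using assms unfolding moments_finite_def by (intro integrable_mult_right) blast
  qed
  then show ?thesis by (simp add: poly_altdef)
qed

lemma integrable_xpoly:
  assumes "moments_finite \<mu>" shows "integrable \<mu> (\<lambda>x. x ^ j * poly q x)"
proof -
  have "(\<lambda>x. x ^ j * poly q x) = (\<lambda>x. poly (monom 1 j * q) x)"
    by (simp only: poly_mult poly_monom mult_1)
  then show ?thesis using integrable_poly[OF assms] by metis
qed

lemma Ij_add: "moments_finite \<mu> \<Longrightarrow> Ij \<mu> j (p + q) = Ij \<mu> j p + Ij \<mu> j q"
  unfolding Ij_def by (simp add: distrib_left integrable_xpoly)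

lemma Ij_diff: "moments_finite \<mu> \<Longrightarrow> Ij \<mu> j (p - q) = Ij \<mu> j p - Ij \<mu> j q"
  unfolding Ij_def by (simp add: right_diff_distrib integrable_xpoly)

lemma Ij_smult: "Ij \<mu> j (smult c p) = c * Ij \<mu> j p"
  unfolding Ij_def by (simp add: mult.left_commute)

lemma Ij_zero: "Ij \<mu> j 0 = 0"
  unfolding Ij_def by simp

lemma Ij_x: "Ij \<mu> j ([:0,1:] * p) = Ij \<mu> (Suc j) p"
  unfolding Ij_def by (simp add: mult.assoc mult.left_commute)

lemma Ij_pc: "Ij \<mu> j (pCons 0 p) = Ij \<mu> (Suc j) p"
  using Ij_x[of \<mu> j p] by simp

definition lowdeg :: "real poly \<Rightarrow> nat \<Rightarrow> bool" where
  "lowdeg q d \<longleftrightarrow> (\<forall>i\<ge>d. coeff q i = 0)"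

lemma lowdeg_iff: "lowdeg q d \<longleftrightarrow> (q = 0 \<or> degree q < d)"
  unfolding lowdeg_def
  by (metis coeff_0 coeff_eq_0 leD le_less_trans leading_coeff_0_iff not_le_imp_less)

lemma lowdeg_add: "lowdeg p d \<Longrightarrow> lowdeg q d \<Longrightarrow> lowdeg (p + q) d"
  unfolding lowdeg_def by simp
lemma lowdeg_diff: "lowdeg p d \<Longrightarrow> lowdeg q d \<Longrightarrow> lowdeg (p - q) d"
  unfolding lowdeg_def by simp
lemma lowdeg_smult: "lowdeg p d \<Longrightarrow> lowdeg (smult c p) d"
  unfolding lowdeg_def by simp
lemma lowdeg_mono: "lowdeg p d \<Longrightarrow> d \<le> e \<Longrightarrow> lowdeg p e"
  unfolding lowdeg_def by simp
lemma lowdeg_deg: "degree p < d \<Longrightarrow> lowdeg p d"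
  unfolding lowdeg_iff by simp
lemma lowdeg_0: "lowdeg 0 d"
  unfolding lowdeg_def by simp

lemma lowdeg_reduce:
  assumes "lowdeg r (Suc d)" "lead_coeff p = 1" "degree p = d"
  shows "lowdeg (r - smult (coeff r d) p) d"
  unfolding lowdeg_def
proof (intro allI impI)
  fix i assume "d \<le> i"
  show "coeff (r - smult (coeff r d) p) i = 0"
  proof (cases "i = d")
    case True then show ?thesis using assms by simp
  next
    case False
    then have "coeff r i = 0" "coeff p i = 0" using assms \<open>d \<le> i\<close>
      by (auto simp: lowdeg_def coeff_eq_0)
    then show ?thesis by simp
  qed
qed

lemma indep_step:
  assumes "smult a p + q = 0" "lead_coeff p = 1" "lowdeg q (degree p)"
  shows "a = 0"
proof -
  have "coeff (smult a p + q) (degree p) = 0" using assms(1) by simp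
  moreover have "coeff q (degree p) = 0" using assms(3) by (simp add: lowdeg_def)
  ultimately show ?thesis using assms(2) by simp
qed

definition orth :: "real measure \<Rightarrow> real measure \<Rightarrow> nat \<Rightarrow> nat \<Rightarrow> real poly \<Rightarrow> bool" where
  "orth \<mu>1 \<mu>2 n m q \<longleftrightarrow> (\<forall>j<n. Ij \<mu>1 j q = 0) \<and> (\<forall>j<m. Ij \<mu>2 j q = 0)"

lemma is_mop_iff: "is_mop \<mu>1 \<mu>2 n m P \<longleftrightarrow> lead_coeff P = 1 \<and> degree P = n + m \<and> orth \<mu>1 \<mu>2 n m P"
  unfolding is_mop_def orth_def Ij_def by simp

definition RC :: "real measure \<Rightarrow> real measure \<Rightarrow> nat \<Rightarrow> nat \<Rightarrow> real \<Rightarrow> real \<Rightarrow> real \<Rightarrow> bool" where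
  "RC \<mu>1 \<mu>2 k n b g d \<longleftrightarrow>
      [:0, 1:] * slp \<mu>1 \<mu>2 k (int n) =
        slp \<mu>1 \<mu>2 k (int n + 1) + smult b (slp \<mu>1 \<mu>2 k (int n))
        + smult g (slp \<mu>1 \<mu>2 k (int n - 1)) + smult d (slp \<mu>1 \<mu>2 k (int n - 2))
      \<and> (slp \<mu>1 \<mu>2 k (int n - 1) = 0 \<longrightarrow> g = 0)
      \<and> (slp \<mu>1 \<mu>2 k (int n - 2) = 0 \<longrightarrow> d = 0)"

lemma rec_coeffs_RC: "rec_coeffs \<mu>1 \<mu>2 k n = (THE (b, g, d). RC \<mu>1 \<mu>2 k n b g d)"
  unfolding rec_coeffs_def RC_def by simp

lemma monic_diff_lowdeg:
  assumes "lead_coeff p = 1" "lead_coeff q = 1" "degree p = Suc d" "degree q = Suc d"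
  shows "lowdeg (p - q) (Suc d)"
  unfolding lowdeg_def
proof (intro allI impI)
  fix i assume "Suc d \<le> i"
  show "coeff (p - q) i = 0"
  proof (cases "i = Suc d")
    case True then show ?thesis using assms by simp
  next
    case False then show ?thesis using assms \<open>Suc d \<le> i\<close> by (simp add: coeff_eq_0)
  qed
qed

lemma monic_x:
  assumes "lead_coeff p = (1::real)"
  shows "lead_coeff ([:0,1:] * p) = 1" "degree ([:0,1:] * p) = Suc (degree p)"
proof -
  have "p \<noteq> 0"
  proof
    assume "p = 0" then show False using assms by simp
  qed
  then show "degree ([:0,1:] * p) = Suc (degree p)" by (simp add: degree_mult_eq)
  show "lead_coeff ([:0,1:] * p) = 1" using assms \<open>p \<noteq> 0\<close> by (simp add: lead_coeff_mult)
qed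

lemma alg1:
  fixes X A A1 B C C1 D :: "real poly"
  assumes "X = A1 + smult be B + smult ge C1 + smult de D" "A1 = A + smult c B" "C1 = C + smult c' D"
  shows "X = A + smult (be + c) B + smult ge C + smult (de + c' * ge) D"
  using assms by (simp add: algebra_simps smult_add_left smult_add_right)

lemma alg2:
  fixes x A2 B B1 C C1 D :: "real poly"
  assumes "x * B1 = A2 + smult bo B1 + smult go C + smult do C1"
    and "x * C = B1 + smult be C + smult ge C1 + smult de D"
    and "B1 = B + smult c C"
  shows "x * B = A2 + smult (bo - c) B + smult (go - c * (be - (bo - c))) C + smult (do - c * ge) C1
           + smult (- (c * de)) D"
proof -
  have "x * B = x * B1 - smult c (x * C)" using assms(3) by (simp add: algebra_simps)
  also have "\<dots> = A2 + smult bo B1 + smult go C + smult do C1 - smult c (B1 + smult be C + smult ge C1 + smult de D)"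
    using assms(1,2) by simp
  also have "\<dots> = A2 + smult (bo - c) B + smult (go - c * (be - (bo - c))) C + smult (do - c * ge) C1
           + smult (- (c * de)) D"
    using assms(3) by (simp add: algebra_simps smult_add_left smult_add_right smult_diff_left smult_diff_right)
  finally show ?thesis .
qed

lemma lowdeg_lt: "degree p < d \<Longrightarrow> lowdeg (smult a p) d"
  by (intro lowdeg_smult lowdeg_deg)

lemma indep2:
  fixes p1 p2 p3 p4 :: "real poly"
  assumes "smult a1 p1 + smult a2 p2 = 0" "lead_coeff p1 = 1" "lead_coeff p2 = 1"
    "degree p1 = Suc (degree p2)"
  shows "a1 = 0 \<and> a2 = 0"
proof -
  have "a1 = 0" by (rule indep_step[OF assms(1)]) (use assms in \<open>auto intro!: lowdeg_lt\<close>)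
  then have "smult a2 p2 = 0" using assms(1) by simp
  then show ?thesis using \<open>a1 = 0\<close> assms(3) by auto
qed

lemma indep3:
  fixes p1 p2 p3 p4 :: "real poly"
  assumes "smult a1 p1 + (smult a2 p2 + smult a3 p3) = 0" "lead_coeff p1 = 1" "lead_coeff p2 = 1"
    "lead_coeff p3 = 1" "degree p1 = Suc (degree p2)" "degree p2 = Suc (degree p3)"
  shows "a1 = 0 \<and> a2 = 0 \<and> a3 = 0"
proof -
  have "a1 = 0" by (rule indep_step[OF assms(1)]) (use assms in \<open>auto intro!: lowdeg_lt lowdeg_add\<close>)
  then have "smult a2 p2 + smult a3 p3 = 0" using assms(1) by simp
  then show ?thesis using \<open>a1 = 0\<close> assms indep2 by blast
qed

lemma indep4:
  fixes p1 p2 p3 p4 :: "real poly"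
  assumes "smult a1 p1 + (smult a2 p2 + (smult a3 p3 + smult a4 p4)) = 0" "lead_coeff p1 = 1" "lead_coeff p2 = 1"
    "lead_coeff p3 = 1" "lead_coeff p4 = 1" "degree p1 = Suc (degree p2)" "degree p2 = Suc (degree p3)"
    "degree p3 = Suc (degree p4)"
  shows "a1 = 0 \<and> a2 = 0 \<and> a3 = 0 \<and> a4 = 0"
proof -
  have "a1 = 0" by (rule indep_step[OF assms(1)]) (use assms in \<open>auto intro!: lowdeg_lt lowdeg_add\<close>)
  then have "smult a2 p2 + (smult a3 p3 + smult a4 p4) = 0" using assms(1) by simp
  then show ?thesis using \<open>a1 = 0\<close> assms indep3 by blast
qed

lemma uniq_b:
  assumes "lowdeg (X - smult b p) d" "lowdeg (X - smult b' p) d" "lead_coeff p = 1" "degree p = d"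
  shows "b = b'"
proof -
  have "coeff (X - smult b p) d = 0" "coeff (X - smult b' p) d = 0" using assms(1,2) unfolding lowdeg_def by auto
  then show ?thesis using assms(3,4) by simp
qed

locale ms =
  fixes \<mu>1 \<mu>2 :: "real measure"
  assumes mf1: "moments_finite \<mu>1" and mf2: "moments_finite \<mu>2"
    and ns: "normal_system \<mu>1 \<mu>2"
begin

abbreviation "P \<equiv> mop \<mu>1 \<mu>2"
abbreviation "S \<equiv> slp \<mu>1 \<mu>2"
abbreviation "Or \<equiv> orth \<mu>1 \<mu>2"

lemma orth_0: "Or n m 0"
  unfolding orth_def by (simp add: Ij_zero)
lemma orth_add: "Or n m p \<Longrightarrow> Or n m q \<Longrightarrow> Or n m (p + q)"
  unfolding orth_def by (simp add: Ij_add mf1 mf2)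
lemma orth_diff: "Or n m p \<Longrightarrow> Or n m q \<Longrightarrow> Or n m (p - q)"
  unfolding orth_def by (simp add: Ij_diff mf1 mf2)
lemma orth_smult: "Or n m p \<Longrightarrow> Or n m (smult c p)"
  unfolding orth_def by (simp add: Ij_smult)
lemma orth_mono: "Or n m p \<Longrightarrow> n' \<le> n \<Longrightarrow> m' \<le> m \<Longrightarrow> Or n' m' p"
  unfolding orth_def by auto
lemma orth_x: "Or n m p \<Longrightarrow> Or (n - 1) (m - 1) ([:0,1:] * p)"
  unfolding orth_def Ij_x by simp

lemma zero_lemma:
  assumes "Or n m q" "lowdeg q (n + m)" shows "q = 0"
proof (rule ccontr)
  assume "q \<noteq> 0"
  then have dq: "degree q < n + m" using assms(2) by (simp add: lowdeg_iff)
  obtain Q where Q: "is_mop \<mu>1 \<mu>2 n m Q" and uQ: "\<And>R. is_mop \<mu>1 \<mu>2 n m R \<Longrightarrow> R = Q"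
    using ns unfolding normal_system_def by metis
  have Q': "lead_coeff Q = 1" "degree Q = n + m" "Or n m Q" using Q by (auto simp: is_mop_iff)
  have d1: "degree (Q + q) = degree Q" using Q' dq by (intro degree_add_eq_left) simp
  have "lead_coeff (q + Q) = lead_coeff Q" using Q' dq by (intro lead_coeff_add_le) simp
  then have d2: "lead_coeff (Q + q) = 1" using Q' by (simp add: add.commute)
  have "is_mop \<mu>1 \<mu>2 n m (Q + q)"
    unfolding is_mop_iff using Q' d1 d2 assms(1) orth_add by simp
  then have "Q + q = Q" by (rule uQ)
  then show False using \<open>q \<noteq> 0\<close> by simp
qed

lemma P_neg: "a < 0 \<or> b < 0 \<Longrightarrow> P a b = 0"
  unfolding mop_def by auto

lemma P_negA: "a < 0 \<Longrightarrow> P a b = 0" by (simp add: P_neg)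
lemma P_negB: "b < 0 \<Longrightarrow> P a b = 0" by (simp add: P_neg)

lemma P_is: "0 \<le> a \<Longrightarrow> 0 \<le> b \<Longrightarrow> is_mop \<mu>1 \<mu>2 (nat a) (nat b) (P a b)"
  using ns unfolding normal_system_def mop_def by (simp add: theI')

lemma P_lc: "0 \<le> a \<Longrightarrow> 0 \<le> b \<Longrightarrow> lead_coeff (P a b) = 1"
  using P_is[of a b] unfolding is_mop_iff by blast
lemma P_deg: "0 \<le> a \<Longrightarrow> 0 \<le> b \<Longrightarrow> degree (P a b) = nat a + nat b"
  using P_is[of a b] unfolding is_mop_iff by blast
lemma P_orth: "Or (nat a) (nat b) (P a b)"
proof (cases "0 \<le> a \<and> 0 \<le> b")
  case True then show ?thesis using P_is[of a b] unfolding is_mop_iff by blast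
next
  case False then show ?thesis using P_neg orth_0 by auto
qed
lemma P_nz: "0 \<le> a \<Longrightarrow> 0 \<le> b \<Longrightarrow> P a b \<noteq> 0"
  using P_lc by force

lemma P_moment:
  assumes "0 \<le> a" "0 \<le> b" shows "Ij \<mu>2 (nat b) (P a b) \<noteq> 0"
proof
  assume h: "Ij \<mu>2 (nat b) (P a b) = 0"
  have "Or (nat a) (Suc (nat b)) (P a b)"
    using P_orth[of a b] h unfolding orth_def by (auto simp: less_Suc_eq)
  moreover have "lowdeg (P a b) (nat a + Suc (nat b))"
    using P_deg[OF assms] by (intro lowdeg_deg) simp
  ultimately have "P a b = 0" by (rule zero_lemma)
  then show False using P_nz[OF assms] by simp
qed

lemma slp_e: "j = int k + 2 * i \<Longrightarrow> S k j = P i (i + int k)"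
  unfolding slp_def Let_def by simp

lemma slp_o: "j = int k + 2 * i + 1 \<Longrightarrow> S k j = P (i + 1) (i + int k)"
  unfolding slp_def Let_def by simp

lemma slp_shape:
  assumes "S k j \<noteq> 0"
  shows "0 \<le> j \<and> lead_coeff (S k j) = 1 \<and> degree (S k j) = nat j"
proof (cases "even (j - int k)")
  case True
  then obtain i where i: "j - int k = 2 * i" by (metis evenE)
  then have "S k j = P i (i + int k)" by (intro slp_e) simp
  moreover have "\<not> (i < 0 \<or> i + int k < 0)" using assms P_neg calculation by metis
  then have a: "0 \<le> i" "0 \<le> i + int k" by auto
  moreover have "nat i + nat (i + int k) = nat j" using i a by arith
  moreover have "0 \<le> j" using i a by arith
  ultimately show ?thesis using P_lc[OF a] P_deg[OF a] by metis
next
  case False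
  then obtain i where i: "j - int k = 2 * i + 1" by (metis oddE)
  then have "S k j = P (i + 1) (i + int k)" by (intro slp_o) simp
  moreover have "\<not> (i + 1 < 0 \<or> i + int k < 0)" using assms P_neg calculation by metis
  then have a: "0 \<le> i + 1" "0 \<le> i + int k" by auto
  moreover have "nat (i + 1) + nat (i + int k) = nat j" using i a by arith
  moreover have "0 \<le> j" using i a by arith
  ultimately show ?thesis using P_lc[OF a] P_deg[OF a] by metis
qed

lemma slp_nz:
  assumes "int k \<le> j" shows "S k j \<noteq> 0"
proof (cases "even (j - int k)")
  case True
  then obtain i where i: "j - int k = 2 * i" by (metis evenE)
  then have "S k j = P i (i + int k)" by (intro slp_e) simp
  then show ?thesis using P_nz i assms by simp
next
  case False
  then obtain i where i: "j - int k = 2 * i + 1" by (metis oddE)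
  then have "S k j = P (i + 1) (i + int k)" by (intro slp_o) simp
  then show ?thesis using P_nz i assms by simp
qed


lemma cc_rel:
  "P (int n + 1) (int n + int k) - P (int n) (int n + int k + 1)
     = smult (cc \<mu>1 \<mu>2 k n) (P (int n) (int n + int k))"
proof -
  define A where "A = P (int n + 1) (int n + int k)"
  define A' where "A' = P (int n) (int n + int k + 1)"
  define B where "B = P (int n) (int n + int k)"
  have lA: "lead_coeff A = 1" "degree A = Suc (2*n+k)" unfolding A_def
    by (rule P_lc; simp) (simp add: P_deg nat_add_distrib)
  have lA': "lead_coeff A' = 1" "degree A' = Suc (2*n+k)" unfolding A'_def
    by (rule P_lc; simp) (simp add: P_deg nat_add_distrib)
  have lB: "lead_coeff B = 1" "degree B = 2*n+k" unfolding B_def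
    by (rule P_lc; simp) (simp add: P_deg nat_add_distrib)
  have oA: "Or n (n+k) A" unfolding A_def
    by (rule orth_mono[OF P_orth]) (simp_all add: nat_add_distrib)
  have oA': "Or n (n+k) A'" unfolding A'_def
    by (rule orth_mono[OF P_orth]) (simp_all add: nat_add_distrib)
  have oB: "Or n (n+k) B" unfolding B_def
    by (rule orth_mono[OF P_orth]) (simp_all add: nat_add_distrib)
  define c0 where "c0 = coeff (A - A') (2*n+k)"
  have "lowdeg (A - A') (Suc (2*n+k))" using lA lA' by (intro monic_diff_lowdeg) auto
  then have "lowdeg (A - A' - smult c0 B) (2*n+k)" unfolding c0_def using lB
    by (intro lowdeg_reduce) auto
  moreover have "Or n (n+k) (A - A' - smult c0 B)" using oA oA' oB
    by (intro orth_diff[OF orth_diff orth_smult])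
  ultimately have "A - A' - smult c0 B = 0"
    by (intro zero_lemma[of n "n+k"]) (simp_all add: mult_2 add.assoc)
  then have eq: "A - A' = smult c0 B" by simp
  have "cc \<mu>1 \<mu>2 k n = c0"
    unfolding cc_def
  proof (rule the_equality)
    show "P (int n + 1) (int n + int k) - P (int n) (int n + int k + 1)
       = smult c0 (P (int n) (int n + int k))" using eq unfolding A_def A'_def B_def .
  next
    fix c assume "P (int n + 1) (int n + int k) - P (int n) (int n + int k + 1)
       = smult c (P (int n) (int n + int k))"
    then have "smult c B = smult c0 B" using eq unfolding A_def A'_def B_def by simp
    then have "coeff (smult c B) (degree B) = coeff (smult c0 B) (degree B)" by simp
    then show "c = c0" using lB by simp
  qed
  then show ?thesis using eq unfolding A_def A'_def B_def by simp
qed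

lemma rec_core:
  assumes lB: "lead_coeff B = 1" "degree B = N" and lA: "lead_coeff A = 1" "degree A = Suc N"
    and oX: "Or a b ([:0,1:] * B - A)" and oB: "Or a b B"
  shows "\<exists>bb. lowdeg ([:0,1:] * B - A - smult bb B) N \<and> Or a b ([:0,1:] * B - A - smult bb B)"
proof -
  have "lowdeg ([:0,1:] * B - A) (Suc N)" using monic_x[OF lB(1)] lB lA
    by (intro monic_diff_lowdeg) auto
  then have "lowdeg ([:0,1:] * B - A - smult (coeff ([:0,1:] * B - A) N) B) N"
    using lB by (intro lowdeg_reduce) auto
  moreover have "Or a b ([:0,1:] * B - A - smult (coeff ([:0,1:] * B - A) N) B)"
    using oX oB by (rule orth_diff[OF _ orth_smult])
  ultimately show ?thesis by blast
qed

lemma rec_gen0: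
  assumes lB: "lead_coeff B = 1" "degree B = N" and lA: "lead_coeff A = 1" "degree A = Suc N"
    and oX: "Or a b ([:0,1:] * B - A)" and oB: "Or a b B"
    and C: "C = 0" and D: "D = 0" and ab: "a + b = N"
  shows "\<exists>bb g d. [:0,1:] * B = A + smult bb B + smult g C + smult d D
            \<and> (C = 0 \<longrightarrow> g = 0) \<and> (D = 0 \<longrightarrow> d = 0)"
proof -
  obtain bb where r: "lowdeg ([:0,1:] * B - A - smult bb B) N" "Or a b ([:0,1:] * B - A - smult bb B)"
    using rec_core[OF assms(1-6)] by blast
  have "[:0,1:] * B - A - smult bb B = 0" using r ab by (intro zero_lemma[of a b]) auto
  then have "[:0,1:] * B = A + smult bb B + smult 0 C + smult 0 D"
    by (simp add: algebra_simps)
  then show ?thesis by blast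
qed

lemma rec_gen1:
  assumes lB: "lead_coeff B = 1" "degree B = N" and lA: "lead_coeff A = 1" "degree A = Suc N"
    and oX: "Or a b ([:0,1:] * B - A)" and oB: "Or a b B"
    and lC: "lead_coeff C = 1" "degree C = N'" "N = Suc N'" and oC: "Or a b C"
    and D: "D = 0" and ab: "a + b = N'"
  shows "\<exists>bb g d. [:0,1:] * B = A + smult bb B + smult g C + smult d D
            \<and> (C = 0 \<longrightarrow> g = 0) \<and> (D = 0 \<longrightarrow> d = 0)"
proof -
  obtain bb where r: "lowdeg ([:0,1:] * B - A - smult bb B) N" "Or a b ([:0,1:] * B - A - smult bb B)"
    using rec_core[OF assms(1-6)] by blast
  define r1 where "r1 = [:0,1:] * B - A - smult bb B"
  define g where "g = coeff r1 N'"
  have "lowdeg (r1 - smult g C) N'" unfolding g_def using r lC unfolding r1_def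
    by (intro lowdeg_reduce) auto
  moreover have "Or a b (r1 - smult g C)" unfolding r1_def by (rule orth_diff[OF r(2) orth_smult[OF oC]])
  ultimately have "r1 - smult g C = 0" using ab by (intro zero_lemma[of a b]) auto
  then have "[:0,1:] * B = A + smult bb B + smult g C + smult 0 D"
    unfolding r1_def by (simp add: algebra_simps)
  moreover have "C \<noteq> 0" using lC by auto
  ultimately show ?thesis by blast
qed

lemma rec_gen2:
  assumes lB: "lead_coeff B = 1" "degree B = N" and lA: "lead_coeff A = 1" "degree A = Suc N"
    and oX: "Or a b ([:0,1:] * B - A)" and oB: "Or a b B"
    and lC: "lead_coeff C = 1" "degree C = Suc N''" "N = Suc (Suc N'')" and oC: "Or a b C"
    and lD: "lead_coeff D = 1" "degree D = N''" and oD: "Or a b D"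
    and ab: "a + b = N''"
  shows "\<exists>bb g d. [:0,1:] * B = A + smult bb B + smult g C + smult d D
            \<and> (C = 0 \<longrightarrow> g = 0) \<and> (D = 0 \<longrightarrow> d = 0)"
proof -
  obtain bb where r: "lowdeg ([:0,1:] * B - A - smult bb B) N" "Or a b ([:0,1:] * B - A - smult bb B)"
    using rec_core[OF assms(1-6)] by blast
  define r1 where "r1 = [:0,1:] * B - A - smult bb B"
  define g where "g = coeff r1 (Suc N'')"
  have l2: "lowdeg (r1 - smult g C) (Suc N'')" unfolding g_def using r lC unfolding r1_def
    by (intro lowdeg_reduce) auto
  define d where "d = coeff (r1 - smult g C) N''"
  have "lowdeg (r1 - smult g C - smult d D) N''" unfolding d_def using l2 lD
    by (intro lowdeg_reduce) auto
  moreover have "Or a b (r1 - smult g C - smult d D)" using r oC oD unfolding r1_def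
    by (intro orth_diff[OF orth_diff[OF _ orth_smult] orth_smult])
  ultimately have "r1 - smult g C - smult d D = 0" using ab by (intro zero_lemma[of a b]) auto
  then have "[:0,1:] * B = A + smult bb B + smult g C + smult d D"
    unfolding r1_def by (simp add: algebra_simps)
  moreover have "C \<noteq> 0" "D \<noteq> 0" using lC lD by auto
  ultimately show ?thesis by blast
qed


lemma rc_unique:
  assumes kn: "k \<le> n" and R1: "RC \<mu>1 \<mu>2 k n b g d" and R2: "RC \<mu>1 \<mu>2 k n b' g' d'"
  shows "b = b' \<and> g = g' \<and> d = d'"
proof -
  define B where "B = S k (int n)"
  define C where "C = S k (int n - 1)"
  define D where "D = S k (int n - 2)"
  define A where "A = S k (int n + 1)"
  have e1: "[:0,1:] * B = A + smult b B + smult g C + smult d D" "C = 0 \<longrightarrow> g = 0" "D = 0 \<longrightarrow> d = 0"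
    using R1 unfolding RC_def A_def B_def C_def D_def by auto
  have e2: "[:0,1:] * B = A + smult b' B + smult g' C + smult d' D" "C = 0 \<longrightarrow> g' = 0" "D = 0 \<longrightarrow> d' = 0"
    using R2 unfolding RC_def A_def B_def C_def D_def by auto
  have "B \<noteq> 0" unfolding B_def using kn by (intro slp_nz) simp
  then have lB: "lead_coeff B = 1" "degree B = n" using slp_shape[of k "int n"] unfolding B_def by auto
  have lC: "C \<noteq> 0 \<Longrightarrow> lead_coeff C = 1 \<and> degree C = n - 1 \<and> 1 \<le> n"
    using slp_shape[of k "int n - 1"] unfolding C_def by auto
  have lD: "D \<noteq> 0 \<Longrightarrow> lead_coeff D = 1 \<and> degree D = n - 2 \<and> 2 \<le> n"
    using slp_shape[of k "int n - 2"] unfolding D_def by auto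
  have "smult (b - b') B + (smult (g - g') C + smult (d - d') D)
      = (A + smult b B + smult g C + smult d D) - (A + smult b' B + smult g' C + smult d' D)"
    by (simp add: algebra_simps smult_diff_left)
  also have "\<dots> = 0" using e1(1) e2(1) by simp
  finally have z: "smult (b - b') B + (smult (g - g') C + smult (d - d') D) = 0" .
  have lowC: "lowdeg C n" using lC by (cases "C = 0") (auto simp: lowdeg_iff)
  have lowD: "lowdeg D n" using lD by (cases "D = 0") (auto simp: lowdeg_iff)
  have "b - b' = 0" using z lB lowC lowD
    by (intro indep_step[of _ B "smult (g - g') C + smult (d - d') D"]) (auto intro: lowdeg_add lowdeg_smult)
  then have bb: "b = b'" by simp
  with z have z2: "smult (g - g') C + smult (d - d') D = 0" by simp
  have gg: "g = g'"
  proof (cases "C = 0")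
    case True then show ?thesis using e1 e2 by simp
  next
    case False
    then have c: "lead_coeff C = 1" "degree C = n - 1" "1 \<le> n" using lC by auto
    have "lowdeg D (degree C)" using lD c by (cases "D = 0") (auto simp: lowdeg_iff)
    then have "g - g' = 0" using z2 c by (intro indep_step[of _ C "smult (d - d') D"]) (auto intro: lowdeg_smult)
    then show ?thesis by simp
  qed
  with z2 have z3: "smult (d - d') D = 0" by simp
  have "d = d'"
  proof (cases "D = 0")
    case True then show ?thesis using e1 e2 by simp
  next
    case False then show ?thesis using z3 by simp
  qed
  with bb gg show ?thesis by simp
qed

lemma rc_char:
  assumes "k \<le> n" "RC \<mu>1 \<mu>2 k n b g d"
  shows "rec_coeffs \<mu>1 \<mu>2 k n = (b, g, d)"
  unfolding rec_coeffs_RC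
proof (rule the_equality)
  show "case (b, g, d) of (b, g, d) \<Rightarrow> RC \<mu>1 \<mu>2 k n b g d" using assms(2) by simp
next
  fix x assume "case x of (b, g, d) \<Rightarrow> RC \<mu>1 \<mu>2 k n b g d"
  then show "x = (b, g, d)" using rc_unique[OF assms(1) _ assms(2)]
    by (cases x) auto
qed


lemma slp_e': "j = int k + 2 * i \<Longrightarrow> i = a \<Longrightarrow> i + int k = b \<Longrightarrow> S k j = P a b"
  using slp_e by blast
lemma slp_o': "j = int k + 2 * i + 1 \<Longrightarrow> i + 1 = a \<Longrightarrow> i + int k = b \<Longrightarrow> S k j = P a b"
  using slp_o by blast

lemma slp_e0: "j = int k + 2 * i \<Longrightarrow> i < 0 \<Longrightarrow> S k j = 0"
  using slp_e P_negA by metis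
lemma slp_o0: "j = int k + 2 * i + 1 \<Longrightarrow> i + int k < 0 \<Longrightarrow> S k j = 0"
  using slp_o P_negB by metis

lemma Q_lc: "lead_coeff (P (int a) (int b)) = 1" by (rule P_lc) simp_all
lemma Q_deg: "degree (P (int a) (int b)) = a + b" by (simp add: P_deg)
lemma Q_orth: "a' \<le> a \<Longrightarrow> b' \<le> b \<Longrightarrow> Or a' b' (P (int a) (int b))"
  using orth_mono[OF P_orth[of "int a" "int b"]] by simp
lemma Q_xorth: "a' \<le> a - 1 \<Longrightarrow> b' \<le> b - 1 \<Longrightarrow> Or a' b' ([:0,1:] * P (int a) (int b))"
  using orth_mono[OF orth_x[OF P_orth[of "int a" "int b"]]] by simp
lemma orth_triv: "Or 0 0 q" unfolding orth_def by simp

lemma rc_exists: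
  assumes "k \<le> n" shows "\<exists>b g d. RC \<mu>1 \<mu>2 k n b g d"
proof -
  have "n = k + 2*((n-k) div 2) \<or> n = k + 2*((n-k) div 2) + 1" using assms by presburger
  then obtain m where "n = k + 2*m \<or> n = k + 2*m + 1" by blast
  then show ?thesis
  proof
    assume hn: "n = k + 2*m"
    show ?thesis
    proof (cases m)
      case 0
      show ?thesis
      proof (cases k)
        case 0
        have eB: "S k (int n) = P 0 0" by (rule slp_e'[where i=0]) (simp_all add: hn \<open>m=0\<close> \<open>k=0\<close>)
        have eA: "S k (int n + 1) = P 1 0" by (rule slp_o'[where i=0]) (simp_all add: hn \<open>m=0\<close> \<open>k=0\<close>)
        have eC: "S k (int n - 1) = 0" by (rule slp_o0[where i="-1"]) (simp_all add: hn \<open>m=0\<close> \<open>k=0\<close>)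
        have eD: "S k (int n - 2) = 0" by (rule slp_e0[where i="-1"]) (simp_all add: hn \<open>m=0\<close> \<open>k=0\<close>)
        have l1: "lead_coeff (P 0 0) = 1" "lead_coeff (P 1 0) = 1" by (rule P_lc; simp)+
        have l2: "degree (P 0 0) = 0" "degree (P 1 0) = Suc 0" by (simp_all add: P_deg)
        obtain b g d where "[:0,1:] * P 0 0 = P 1 0 + smult b (P 0 0)
           + smult g 0 + smult d 0 \<and> (0 = (0::real poly) \<longrightarrow> g = 0) \<and> (0 = (0::real poly) \<longrightarrow> d = 0)"
          using rec_gen0[OF l1(1) l2(1) l1(2) l2(2) orth_triv orth_triv refl refl] by auto
        then show ?thesis unfolding RC_def eA eB eC eD by blast
      next
        case (Suc k')
        have eB: "S k (int n) = P (int 0) (int k)" by (rule slp_e'[where i=0]) (simp_all add: hn \<open>m=0\<close>)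
        have eA: "S k (int n + 1) = P (int 1) (int k)" by (rule slp_o'[where i=0]) (simp_all add: hn \<open>m=0\<close>)
        have eC: "S k (int n - 1) = P (int 0) (int k')" by (rule slp_o'[where i="-1"]) (simp_all add: hn \<open>m=0\<close> Suc)
        have eD: "S k (int n - 2) = 0" by (rule slp_e0[where i="-1"]) (simp_all add: hn \<open>m=0\<close>)
        have f2: "degree (P (int 0) (int k)) = k" using Q_deg[of 0 k] by simp
        have f4: "degree (P (int 1) (int k)) = Suc k" using Q_deg[of 1 k] by simp
        have f5: "Or 0 k' ([:0,1:] * P (int 0) (int k) - P (int 1) (int k))"
          by (rule orth_diff[OF Q_xorth Q_orth]) (simp_all add: Suc)
        have f6: "Or 0 k' (P (int 0) (int k))" by (rule Q_orth) (simp_all add: Suc)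
        have f8: "degree (P (int 0) (int k')) = k'" using Q_deg[of 0 k'] by simp
        have f10: "Or 0 k' (P (int 0) (int k'))" by (rule Q_orth) simp_all
        have f11: "0 + k' = k'" by simp
        obtain b g d where "[:0,1:] * P (int 0) (int k) = P (int 1) (int k) + smult b (P (int 0) (int k))
           + smult g (P (int 0) (int k')) + smult d 0 \<and> (P (int 0) (int k') = 0 \<longrightarrow> g = 0) \<and> (0 = (0::real poly) \<longrightarrow> d = 0)"
          using rec_gen1[OF Q_lc f2 Q_lc f4 f5 f6 Q_lc f8 Suc f10 refl f11] by blast
        then show ?thesis unfolding RC_def eA eB eC eD by blast
      qed
    next
      case (Suc m')
      have eB: "S k (int n) = P (int m) (int (m+k))" by (rule slp_e'[where i="int m"]) (simp_all add: hn)
      have eA: "S k (int n + 1) = P (int (m+1)) (int (m+k))" by (rule slp_o'[where i="int m"]) (simp_all add: hn)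
      have eC: "S k (int n - 1) = P (int m) (int (m'+k))" by (rule slp_o'[where i="int m'"]) (simp_all add: hn Suc)
      have eD: "S k (int n - 2) = P (int m') (int (m'+k))" by (rule slp_e'[where i="int m'"]) (simp_all add: hn Suc)
      have f2: "degree (P (int m) (int (m+k))) = n" using Q_deg[of m "m+k"] hn by simp
      have f4: "degree (P (int (m+1)) (int (m+k))) = Suc n" using Q_deg[of "m+1" "m+k"] hn by simp
      have f5: "Or m' (m'+k) ([:0,1:] * P (int m) (int (m+k)) - P (int (m+1)) (int (m+k)))"
        by (rule orth_diff[OF Q_xorth Q_orth]) (simp_all add: Suc)
      have f6: "Or m' (m'+k) (P (int m) (int (m+k)))" by (rule Q_orth) (simp_all add: Suc)
      have f8: "degree (P (int m) (int (m'+k))) = Suc (m'+m'+k)" using Q_deg[of m "m'+k"] Suc by simp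
      have f9: "n = Suc (Suc (m'+m'+k))" using hn Suc by simp
      have f10: "Or m' (m'+k) (P (int m) (int (m'+k)))" by (rule Q_orth) (simp_all add: Suc)
      have f12: "degree (P (int m') (int (m'+k))) = m'+m'+k" using Q_deg[of m' "m'+k"] by simp
      have f13: "Or m' (m'+k) (P (int m') (int (m'+k)))" by (rule Q_orth) simp_all
      have f14: "m' + (m'+k) = m'+m'+k" by simp
      obtain b g d where "[:0,1:] * P (int m) (int (m+k)) = P (int (m+1)) (int (m+k)) + smult b (P (int m) (int (m+k)))
           + smult g (P (int m) (int (m'+k))) + smult d (P (int m') (int (m'+k)))
           \<and> (P (int m) (int (m'+k)) = 0 \<longrightarrow> g = 0) \<and> (P (int m') (int (m'+k)) = 0 \<longrightarrow> d = 0)"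
        using rec_gen2[OF Q_lc f2 Q_lc f4 f5 f6 Q_lc f8 f9 f10 Q_lc f12 f13 f14] by blast
      then show ?thesis unfolding RC_def eA eB eC eD by blast
    qed
  next
    assume hn: "n = k + 2*m + 1"
    have eB: "S k (int n) = P (int (m+1)) (int (m+k))" by (rule slp_o'[where i="int m"]) (simp_all add: hn)
    have eA: "S k (int n + 1) = P (int (m+1)) (int (m+1+k))" by (rule slp_e'[where i="int m + 1"]) (simp_all add: hn)
    have eC: "S k (int n - 1) = P (int m) (int (m+k))" by (rule slp_e'[where i="int m"]) (simp_all add: hn)
    have f2: "degree (P (int (m+1)) (int (m+k))) = n" using Q_deg[of "m+1" "m+k"] hn by simp
    have f4: "degree (P (int (m+1)) (int (m+1+k))) = Suc n" using Q_deg[of "m+1" "m+1+k"] hn by simp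
    show ?thesis
    proof (cases "m + k")
      case 0
      then have m0: "m = 0" "k = 0" by auto
      have eD: "S k (int n - 2) = 0" by (rule slp_o0[where i="-1"]) (simp_all add: hn m0)
      have f5: "Or 0 0 ([:0,1:] * P (int (m+1)) (int (m+k)) - P (int (m+1)) (int (m+1+k)))" by (rule orth_triv)
      have f6: "Or 0 0 (P (int (m+1)) (int (m+k)))" by (rule orth_triv)
      have f8: "degree (P (int m) (int (m+k))) = 0" using Q_deg[of m "m+k"] m0 by simp
      have f9: "n = Suc 0" using hn m0 by simp
      have f10: "Or 0 0 (P (int m) (int (m+k)))" by (rule orth_triv)
      have f11: "0 + 0 = (0::nat)" by simp
      obtain b g d where "[:0,1:] * P (int (m+1)) (int (m+k)) = P (int (m+1)) (int (m+1+k)) + smult b (P (int (m+1)) (int (m+k)))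
           + smult g (P (int m) (int (m+k))) + smult d 0
           \<and> (P (int m) (int (m+k)) = 0 \<longrightarrow> g = 0) \<and> (0 = (0::real poly) \<longrightarrow> d = 0)"
        using rec_gen1[OF Q_lc f2 Q_lc f4 f5 f6 Q_lc f8 f9 f10 refl f11] by blast
      then show ?thesis unfolding RC_def eA eB eC eD by blast
    next
      case (Suc t)
      have eD: "S k (int n - 2) = P (int m) (int t)" by (rule slp_o'[where i="int m - 1"]) (use Suc in \<open>simp_all add: hn\<close>)
      have f5: "Or m t ([:0,1:] * P (int (m+1)) (int (m+k)) - P (int (m+1)) (int (m+1+k)))"
        by (rule orth_diff[OF Q_xorth Q_orth]) (simp_all add: Suc)
      have f6: "Or m t (P (int (m+1)) (int (m+k)))" by (rule Q_orth) (simp_all add: Suc)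
      have f8: "degree (P (int m) (int (m+k))) = Suc (m+t)" using Q_deg[of m "m+k"] Suc by simp
      have f9: "n = Suc (Suc (m+t))" using hn Suc by simp
      have f10: "Or m t (P (int m) (int (m+k)))" by (rule Q_orth) (simp_all add: Suc)
      have f12: "degree (P (int m) (int t)) = m+t" using Q_deg[of m t] by simp
      have f13: "Or m t (P (int m) (int t))" by (rule Q_orth) simp_all
      have f14: "m + t = m + t" by simp
      obtain b g d where "[:0,1:] * P (int (m+1)) (int (m+k)) = P (int (m+1)) (int (m+1+k)) + smult b (P (int (m+1)) (int (m+k)))
           + smult g (P (int m) (int (m+k))) + smult d (P (int m) (int t))
           \<and> (P (int m) (int (m+k)) = 0 \<longrightarrow> g = 0) \<and> (P (int m) (int t) = 0 \<longrightarrow> d = 0)"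
        using rec_gen2[OF Q_lc f2 Q_lc f4 f5 f6 Q_lc f8 f9 f10 Q_lc f12 f13 f14] by blast
      then show ?thesis unfolding RC_def eA eB eC eD by blast
    qed
  qed
qed

lemma rc_holds:
  assumes "k \<le> n"
  shows "RC \<mu>1 \<mu>2 k n (beta \<mu>1 \<mu>2 k n) (gamma \<mu>1 \<mu>2 k n) (delta \<mu>1 \<mu>2 k n)"
proof -
  obtain b g d where R: "RC \<mu>1 \<mu>2 k n b g d" using rc_exists[OF assms] by blast
  have "rec_coeffs \<mu>1 \<mu>2 k n = (b, g, d)" by (rule rc_char[OF assms R])
  then show ?thesis using R assms unfolding beta_def gamma_def delta_def by simp
qed



abbreviation "be k n \<equiv> beta \<mu>1 \<mu>2 k (2*n+k)"
abbreviation "ge k n \<equiv> gamma \<mu>1 \<mu>2 k (2*n+k)"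
abbreviation "de k n \<equiv> delta \<mu>1 \<mu>2 k (2*n+k)"
abbreviation "bo k n \<equiv> beta \<mu>1 \<mu>2 k (2*n+k+1)"
abbreviation "go k n \<equiv> gamma \<mu>1 \<mu>2 k (2*n+k+1)"
abbreviation "do k n \<equiv> delta \<mu>1 \<mu>2 k (2*n+k+1)"

lemma recE:
  "[:0,1:] * P (int n) (int n + int k) = P (int n + 1) (int n + int k)
     + smult (be k n) (P (int n) (int n + int k)) + smult (ge k n) (P (int n) (int n + int k - 1))
     + smult (de k n) (P (int n - 1) (int n + int k - 1))"
proof -
  have R: "RC \<mu>1 \<mu>2 k (2*n+k) (be k n) (ge k n) (de k n)" by (rule rc_holds) simp
  have e0: "S k (int (2*n+k)) = P (int n) (int n + int k)" by (rule slp_e'[where i="int n"]) simp_all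
  have e1: "S k (int (2*n+k) + 1) = P (int n + 1) (int n + int k)" by (rule slp_o'[where i="int n"]) simp_all
  have e2: "S k (int (2*n+k) - 1) = P (int n) (int n + int k - 1)" by (rule slp_o'[where i="int n - 1"]) simp_all
  have e3: "S k (int (2*n+k) - 2) = P (int n - 1) (int n + int k - 1)" by (rule slp_e'[where i="int n - 1"]) simp_all
  show ?thesis using R unfolding RC_def e0 e1 e2 e3 by blast
qed

lemma recO:
  "[:0,1:] * P (int n + 1) (int n + int k) = P (int n + 1) (int n + int k + 1)
     + smult (bo k n) (P (int n + 1) (int n + int k)) + smult (go k n) (P (int n) (int n + int k))
     + smult (do k n) (P (int n) (int n + int k - 1))"
proof -
  have R: "RC \<mu>1 \<mu>2 k (2*n+k+1) (bo k n) (go k n) (do k n)" by (rule rc_holds) simp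
  have e0: "S k (int (2*n+k+1)) = P (int n + 1) (int n + int k)" by (rule slp_o'[where i="int n"]) simp_all
  have e1: "S k (int (2*n+k+1) + 1) = P (int n + 1) (int n + int k + 1)" by (rule slp_e'[where i="int n + 1"]) simp_all
  have e2: "S k (int (2*n+k+1) - 1) = P (int n) (int n + int k)" by (rule slp_e'[where i="int n"]) simp_all
  have e3: "S k (int (2*n+k+1) - 2) = P (int n) (int n + int k - 1)" by (rule slp_o'[where i="int n - 1"]) simp_all
  show ?thesis using R unfolding RC_def e0 e1 e2 e3 by blast
qed

lemma ccM:
  assumes "1 \<le> n"
  shows "P (int n) (int n + int k - 1) - P (int n - 1) (int n + int k)
     = smult (cc \<mu>1 \<mu>2 k (n-1)) (P (int n - 1) (int n + int k - 1))"
proof -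
  have h: "int (n - 1) = int n - 1" using assms by simp
  have "P (int (n-1) + 1) (int (n-1) + int k) - P (int (n-1)) (int (n-1) + int k + 1)
     = smult (cc \<mu>1 \<mu>2 k (n-1)) (P (int (n-1)) (int (n-1) + int k))" by (rule cc_rel)
  moreover have "int (n-1) + int k = int n + int k - 1" "int (n-1) + int k + 1 = int n + int k"
    "int (n-1) + 1 = int n" using h by simp_all
  ultimately show ?thesis unfolding h by simp
qed

lemma part_even:
  assumes "1 \<le> n"
  shows "RC \<mu>1 \<mu>2 (k+1) (2*n+k) (be k n + cc \<mu>1 \<mu>2 k n) (ge k n)
           (de k n + cc \<mu>1 \<mu>2 k (n-1) * ge k n)"
proof -
  have e0: "S (k+1) (int (2*n+k)) = P (int n) (int n + int k)" by (rule slp_o'[where i="int n - 1"]) simp_all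
  have e1: "S (k+1) (int (2*n+k) + 1) = P (int n) (int n + int k + 1)" by (rule slp_e'[where i="int n"]) simp_all
  have e2: "S (k+1) (int (2*n+k) - 1) = P (int n - 1) (int n + int k)" by (rule slp_e'[where i="int n - 1"]) simp_all
  have e3: "S (k+1) (int (2*n+k) - 2) = P (int n - 1) (int n + int k - 1)" by (rule slp_o'[where i="int n - 2"]) simp_all
  have c1: "P (int n + 1) (int n + int k) = P (int n) (int n + int k + 1) + smult (cc \<mu>1 \<mu>2 k n) (P (int n) (int n + int k))"
    using cc_rel[of n k] by (simp add: algebra_simps)
  have c2: "P (int n) (int n + int k - 1) = P (int n - 1) (int n + int k) + smult (cc \<mu>1 \<mu>2 k (n-1)) (P (int n - 1) (int n + int k - 1))"
    using ccM[OF assms, of k] by (simp add: algebra_simps)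
  have eq: "[:0,1:] * P (int n) (int n + int k) = P (int n) (int n + int k + 1)
     + smult (be k n + cc \<mu>1 \<mu>2 k n) (P (int n) (int n + int k)) + smult (ge k n) (P (int n - 1) (int n + int k))
     + smult (de k n + cc \<mu>1 \<mu>2 k (n-1) * ge k n) (P (int n - 1) (int n + int k - 1))"
    by (rule alg1[OF recE c1 c2])
  have nz: "P (int n - 1) (int n + int k) \<noteq> 0" "P (int n - 1) (int n + int k - 1) \<noteq> 0"
    using assms by (simp_all add: P_nz)
  show ?thesis unfolding RC_def e0 e1 e2 e3 using eq nz by blast
qed


lemma evenEq:
  assumes "1 \<le> n"
  shows "[:0,1:] * P (int n) (int n + int k) = P (int n) (int n + int k + 1)
     + smult (be k n + cc \<mu>1 \<mu>2 k n) (P (int n) (int n + int k)) + smult (ge k n) (P (int n - 1) (int n + int k))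
     + smult (de k n + cc \<mu>1 \<mu>2 k (n-1) * ge k n) (P (int n - 1) (int n + int k - 1))"
proof -
  have c1: "P (int n + 1) (int n + int k) = P (int n) (int n + int k + 1) + smult (cc \<mu>1 \<mu>2 k n) (P (int n) (int n + int k))"
    using cc_rel[of n k] by (simp add: algebra_simps)
  have c2: "P (int n) (int n + int k - 1) = P (int n - 1) (int n + int k) + smult (cc \<mu>1 \<mu>2 k (n-1)) (P (int n - 1) (int n + int k - 1))"
    using ccM[OF assms, of k] by (simp add: algebra_simps)
  show ?thesis by (rule alg1[OF recE c1 c2])
qed

lemma even_vals:
  assumes "1 \<le> n"
  shows "beta \<mu>1 \<mu>2 (k+1) (2*n+k) = be k n + cc \<mu>1 \<mu>2 k n
       \<and> gamma \<mu>1 \<mu>2 (k+1) (2*n+k) = ge k n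
       \<and> delta \<mu>1 \<mu>2 (k+1) (2*n+k) = de k n + cc \<mu>1 \<mu>2 k (n-1) * ge k n"
proof -
  have kn: "k + 1 \<le> 2*n+k" using assms by simp
  have "rec_coeffs \<mu>1 \<mu>2 (k+1) (2*n+k) = (be k n + cc \<mu>1 \<mu>2 k n, ge k n, de k n + cc \<mu>1 \<mu>2 k (n-1) * ge k n)"
    by (rule rc_char[OF kn part_even[OF assms]])
  then show ?thesis using kn unfolding beta_def gamma_def delta_def by simp
qed

lemma Ij2_zero: "0 \<le> a \<Longrightarrow> j < nat b \<Longrightarrow> Ij \<mu>2 j (P a b) = 0"
  using P_orth[of a b] unfolding orth_def by auto

lemma Ij2_lin: "Ij \<mu>2 j (p + q) = Ij \<mu>2 j p + Ij \<mu>2 j q"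
  by (rule Ij_add[OF mf2])

lemma ge0_nz:
  assumes "1 \<le> k" shows "ge k 0 \<noteq> 0"
proof
  assume g0: "ge k 0 = 0"
  have E: "[:0,1:] * P (int 0) (int 0 + int k) = P (int 0 + 1) (int 0 + int k)
     + smult (be k 0) (P (int 0) (int 0 + int k)) + smult (ge k 0) (P (int 0) (int 0 + int k - 1))
     + smult (de k 0) (P (int 0 - 1) (int 0 + int k - 1))" by (rule recE)
  have "Ij \<mu>2 (k-1) ([:0,1:] * P 0 (int k)) = Ij \<mu>2 (k-1) (P 1 (int k)) + be k 0 * Ij \<mu>2 (k-1) (P 0 (int k))"
    using arg_cong[OF E, of "Ij \<mu>2 (k-1)"] g0 by (simp add: Ij2_lin Ij_smult P_negA Ij_zero del: Ij_x)
  moreover have "Ij \<mu>2 (k-1) (P 1 (int k)) = 0" "Ij \<mu>2 (k-1) (P 0 (int k)) = 0"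
    using assms by (auto intro!: Ij2_zero)
  moreover have "Ij \<mu>2 (k-1) ([:0,1:] * P 0 (int k)) = Ij \<mu>2 (nat (int k)) (P 0 (int k))"
    using assms by (simp add: Ij_pc)
  ultimately show False using P_moment[of 0 "int k"] by simp
qed


lemma deltap_nz:
  assumes "1 \<le> n" shows "de k n + cc \<mu>1 \<mu>2 k (n-1) * ge k n \<noteq> 0"
proof
  assume d0: "de k n + cc \<mu>1 \<mu>2 k (n-1) * ge k n = 0"
  have "Ij \<mu>2 (n+k-1) ([:0,1:] * P (int n) (int n + int k)) = Ij \<mu>2 (n+k-1) (P (int n) (int n + int k + 1))
     + (be k n + cc \<mu>1 \<mu>2 k n) * Ij \<mu>2 (n+k-1) (P (int n) (int n + int k))
     + ge k n * Ij \<mu>2 (n+k-1) (P (int n - 1) (int n + int k))"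
    using arg_cong[OF evenEq[OF assms, of k], of "Ij \<mu>2 (n+k-1)"] d0
    by (simp add: Ij2_lin Ij_smult Ij_zero del: Ij_x)
  moreover have "Ij \<mu>2 (n+k-1) (P (int n) (int n + int k + 1)) = 0"
    "Ij \<mu>2 (n+k-1) (P (int n) (int n + int k)) = 0"
    "Ij \<mu>2 (n+k-1) (P (int n - 1) (int n + int k)) = 0"
    using assms by (auto intro!: Ij2_zero)
  moreover have "Ij \<mu>2 (n+k-1) ([:0,1:] * P (int n) (int n + int k)) = Ij \<mu>2 (nat (int n + int k)) (P (int n) (int n + int k))"
    using assms by (simp add: Ij_pc nat_add_distrib)
  ultimately show False using P_moment[of "int n" "int n + int k"] by simp
qed

lemma beta_special:
  "beta \<mu>1 \<mu>2 (k+1) k = be k 0 + cc \<mu>1 \<mu>2 k 0"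
proof -
  have def: "beta \<mu>1 \<mu>2 (k+1) k = (THE b. lowdeg ([:0,1:] * P 0 (int k) - P 0 (int k + 1) - smult b (P 0 (int k))) k)"
    unfolding beta_def Let_def lowdeg_iff by simp
  have E: "[:0,1:] * P (int 0) (int 0 + int k) = P (int 0 + 1) (int 0 + int k)
     + smult (be k 0) (P (int 0) (int 0 + int k)) + smult (ge k 0) (P (int 0) (int 0 + int k - 1))
     + smult (de k 0) (P (int 0 - 1) (int 0 + int k - 1))" by (rule recE)
  have C: "P (int 0 + 1) (int 0 + int k) - P (int 0) (int 0 + int k + 1)
     = smult (cc \<mu>1 \<mu>2 k 0) (P (int 0) (int 0 + int k))" by (rule cc_rel)
  have r: "[:0,1:] * P 0 (int k) - P 0 (int k + 1) - smult (be k 0 + cc \<mu>1 \<mu>2 k 0) (P 0 (int k))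
      = smult (ge k 0) (P 0 (int k - 1))"
  proof -
    have E': "[:0,1:] * P 0 (int k) = P 1 (int k) + smult (be k 0) (P 0 (int k)) + smult (ge k 0) (P 0 (int k - 1))"
      using E by (simp add: P_negA)
    have C': "P 1 (int k) = P 0 (int k + 1) + smult (cc \<mu>1 \<mu>2 k 0) (P 0 (int k))"
      using C by (simp add: algebra_simps)
    show ?thesis unfolding E' C' by (simp add: algebra_simps smult_add_left)
  qed
  have low: "lowdeg (smult (ge k 0) (P 0 (int k - 1))) k"
  proof (cases k)
    case 0 then show ?thesis by (simp add: P_negB lowdeg_0)
  next
    case (Suc k') then show ?thesis by (intro lowdeg_smult lowdeg_deg) (simp add: P_deg)
  qed
  have lc: "lead_coeff (P 0 (int k)) = 1" by (rule P_lc) simp_all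
  have dg: "degree (P 0 (int k)) = k" by (simp add: P_deg)
  show ?thesis unfolding def
  proof (rule the_equality)
    show "lowdeg ([:0,1:] * P 0 (int k) - P 0 (int k + 1) - smult (be k 0 + cc \<mu>1 \<mu>2 k 0) (P 0 (int k))) k"
      unfolding r by (rule low)
  next
    fix b assume "lowdeg ([:0,1:] * P 0 (int k) - P 0 (int k + 1) - smult b (P 0 (int k))) k"
    then show "b = be k 0 + cc \<mu>1 \<mu>2 k 0"
      using low unfolding r[symmetric] by (rule uniq_b[OF _ _ lc dg])
  qed
qed

lemma oddEq:
  "[:0,1:] * P (int n) (int n + int k + 1) = P (int n + 1) (int n + int k + 1)
     + smult (bo k n - cc \<mu>1 \<mu>2 k n) (P (int n) (int n + int k + 1))
     + smult (go k n - cc \<mu>1 \<mu>2 k n * (be k n - (bo k n - cc \<mu>1 \<mu>2 k n))) (P (int n) (int n + int k))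
     + smult (do k n - cc \<mu>1 \<mu>2 k n * ge k n) (P (int n) (int n + int k - 1))
     + smult (- (cc \<mu>1 \<mu>2 k n * de k n)) (P (int n - 1) (int n + int k - 1))"
proof -
  have c1: "P (int n + 1) (int n + int k) = P (int n) (int n + int k + 1) + smult (cc \<mu>1 \<mu>2 k n) (P (int n) (int n + int k))"
    using cc_rel[of n k] by (simp add: algebra_simps)
  show ?thesis by (rule alg2[OF recO recE c1])
qed

lemma oddR:
  "[:0,1:] * P (int n) (int n + int k + 1) = P (int n + 1) (int n + int k + 1)
     + smult (beta \<mu>1 \<mu>2 (k+1) (2*n+k+1)) (P (int n) (int n + int k + 1))
     + smult (gamma \<mu>1 \<mu>2 (k+1) (2*n+k+1)) (P (int n) (int n + int k))
     + smult (delta \<mu>1 \<mu>2 (k+1) (2*n+k+1)) (P (int n - 1) (int n + int k))"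
proof -
  have R: "RC \<mu>1 \<mu>2 (k+1) (2*n+k+1) (beta \<mu>1 \<mu>2 (k+1) (2*n+k+1)) (gamma \<mu>1 \<mu>2 (k+1) (2*n+k+1))
      (delta \<mu>1 \<mu>2 (k+1) (2*n+k+1))" by (rule rc_holds) simp
  have e0: "S (k+1) (int (2*n+k+1)) = P (int n) (int n + int k + 1)" by (rule slp_e'[where i="int n"]) simp_all
  have e1: "S (k+1) (int (2*n+k+1) + 1) = P (int n + 1) (int n + int k + 1)" by (rule slp_o'[where i="int n"]) simp_all
  have e2: "S (k+1) (int (2*n+k+1) - 1) = P (int n) (int n + int k)" by (rule slp_o'[where i="int n - 1"]) simp_all
  have e3: "S (k+1) (int (2*n+k+1) - 2) = P (int n - 1) (int n + int k)" by (rule slp_e'[where i="int n - 1"]) simp_all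
  show ?thesis using R unfolding RC_def e0 e1 e2 e3 by blast
qed


lemma odd_pos:
  assumes "1 \<le> n"
  shows "beta \<mu>1 \<mu>2 (k+1) (2*n+k+1) = bo k n - cc \<mu>1 \<mu>2 k n
    \<and> gamma \<mu>1 \<mu>2 (k+1) (2*n+k+1) = go k n - cc \<mu>1 \<mu>2 k n * (be k n - (bo k n - cc \<mu>1 \<mu>2 k n))
    \<and> delta \<mu>1 \<mu>2 (k+1) (2*n+k+1) = do k n - cc \<mu>1 \<mu>2 k n * ge k n
    \<and> (do k n - cc \<mu>1 \<mu>2 k n * ge k n) * cc \<mu>1 \<mu>2 k (n-1) - cc \<mu>1 \<mu>2 k n * de k n = 0"
proof -
  define A2 where "A2 = P (int n + 1) (int n + int k + 1)"
  define B where "B = P (int n) (int n + int k + 1)"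
  define C where "C = P (int n) (int n + int k)"
  define D' where "D' = P (int n - 1) (int n + int k)"
  define D where "D = P (int n - 1) (int n + int k - 1)"
  define C1 where "C1 = P (int n) (int n + int k - 1)"
  define b1 where "b1 = bo k n - cc \<mu>1 \<mu>2 k n"
  define g1 where "g1 = go k n - cc \<mu>1 \<mu>2 k n * (be k n - (bo k n - cc \<mu>1 \<mu>2 k n))"
  define d1 where "d1 = do k n - cc \<mu>1 \<mu>2 k n * ge k n"
  define e where "e = d1 * cc \<mu>1 \<mu>2 k (n-1) - cc \<mu>1 \<mu>2 k n * de k n"
  define b2 where "b2 = beta \<mu>1 \<mu>2 (k+1) (2*n+k+1)"
  define g2 where "g2 = gamma \<mu>1 \<mu>2 (k+1) (2*n+k+1)"
  define d2 where "d2 = delta \<mu>1 \<mu>2 (k+1) (2*n+k+1)"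
  have eq1: "[:0,1:] * B = A2 + smult b1 B + smult g1 C + smult d1 C1 + smult (- (cc \<mu>1 \<mu>2 k n * de k n)) D"
    using oddEq[of n k] unfolding A2_def B_def C_def C1_def D_def b1_def g1_def d1_def .
  have eq2: "[:0,1:] * B = A2 + smult b2 B + smult g2 C + smult d2 D'"
    using oddR[of n k] unfolding A2_def B_def C_def D'_def b2_def g2_def d2_def .
  have c2: "C1 = D' + smult (cc \<mu>1 \<mu>2 k (n-1)) D"
    using ccM[OF assms, of k] unfolding C1_def D'_def D_def by (simp add: algebra_simps)
  have "smult (b1 - b2) B + (smult (g1 - g2) C + (smult (d1 - d2) D' + smult e D))
     = (A2 + smult b1 B + smult g1 C + smult d1 C1 + smult (- (cc \<mu>1 \<mu>2 k n * de k n)) D)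
       - (A2 + smult b2 B + smult g2 C + smult d2 D')"
    unfolding c2 e_def by (simp add: algebra_simps smult_add_right smult_diff_left smult_add_left)
  also have "\<dots> = 0" using eq1 eq2 by simp
  finally have Z: "smult (b1 - b2) B + (smult (g1 - g2) C + (smult (d1 - d2) D' + smult e D)) = 0" .
  have lc: "lead_coeff B = 1" "lead_coeff C = 1" "lead_coeff D' = 1" "lead_coeff D = 1"
    unfolding B_def C_def D'_def D_def by (rule P_lc; use assms in simp)+
  have dg: "degree B = n + (n + k + 1)" "degree C = n + (n+k)" "degree D' = (n - 1) + (n + k)"
      "degree D = (n - 1) + (n + k - 1)"
    unfolding B_def C_def D'_def D_def using assms by (simp_all add: P_deg nat_add_distrib nat_diff_distrib)
  have "b1 - b2 = 0 \<and> g1 - g2 = 0 \<and> d1 - d2 = 0 \<and> e = 0"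
    by (rule indep4[OF Z lc]) (use dg assms in simp_all)
  then have "b2 = b1" "g2 = g1" "d2 = d1" "e = 0" by linarith+
  then show ?thesis unfolding b1_def g1_def d1_def e_def b2_def g2_def d2_def by blast
qed

lemma odd_zero:
  shows "beta \<mu>1 \<mu>2 (k+1) (2*0+k+1) = bo k 0 - cc \<mu>1 \<mu>2 k 0
    \<and> gamma \<mu>1 \<mu>2 (k+1) (2*0+k+1) = go k 0 - cc \<mu>1 \<mu>2 k 0 * (be k 0 - (bo k 0 - cc \<mu>1 \<mu>2 k 0))
    \<and> (1 \<le> k \<longrightarrow> do k 0 - cc \<mu>1 \<mu>2 k 0 * ge k 0 = 0)"
proof -
  define n :: nat where "n = 0"
  define A2 where "A2 = P (int n + 1) (int n + int k + 1)"
  define B where "B = P (int n) (int n + int k + 1)"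
  define C where "C = P (int n) (int n + int k)"
  define C1 where "C1 = P (int n) (int n + int k - 1)"
  define b1 where "b1 = bo k n - cc \<mu>1 \<mu>2 k n"
  define g1 where "g1 = go k n - cc \<mu>1 \<mu>2 k n * (be k n - (bo k n - cc \<mu>1 \<mu>2 k n))"
  define d1 where "d1 = do k n - cc \<mu>1 \<mu>2 k n * ge k n"
  define b2 where "b2 = beta \<mu>1 \<mu>2 (k+1) (2*n+k+1)"
  define g2 where "g2 = gamma \<mu>1 \<mu>2 (k+1) (2*n+k+1)"
  define d2 where "d2 = delta \<mu>1 \<mu>2 (k+1) (2*n+k+1)"
  have z1: "P (int n - 1) (int n + int k - 1) = 0" "P (int n - 1) (int n + int k) = 0"
    unfolding n_def by (simp_all add: P_negA)
  have eq1: "[:0,1:] * B = A2 + smult b1 B + smult g1 C + smult d1 C1"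
    using oddEq[of n k] unfolding A2_def B_def C_def C1_def b1_def g1_def d1_def z1 by simp
  have eq2: "[:0,1:] * B = A2 + smult b2 B + smult g2 C"
    using oddR[of n k] unfolding A2_def B_def C_def b2_def g2_def d2_def z1 by simp
  have "smult (b1 - b2) B + (smult (g1 - g2) C + smult d1 C1)
     = (A2 + smult b1 B + smult g1 C + smult d1 C1) - (A2 + smult b2 B + smult g2 C)"
    by (simp add: algebra_simps smult_diff_left)
  also have "\<dots> = 0" using eq1 eq2 by simp
  finally have Z: "smult (b1 - b2) B + (smult (g1 - g2) C + smult d1 C1) = 0" .
  have lc: "lead_coeff B = 1" "lead_coeff C = 1"
    unfolding B_def C_def by (rule P_lc; simp)+
  have dg: "degree B = k + 1" "degree C = k"
    unfolding B_def C_def n_def by (simp_all add: P_deg)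
  have res: "b1 - b2 = 0 \<and> g1 - g2 = 0 \<and> (1 \<le> k \<longrightarrow> d1 = 0)"
  proof (cases k)
    case 0
    then have "C1 = 0" unfolding C1_def n_def by (simp add: P_negB)
    then have "b1 - b2 = 0 \<and> g1 - g2 = 0" using Z lc dg by (intro indep2[of _ B _ C]) simp_all
    then show ?thesis using 0 by simp
  next
    case (Suc k')
    have lc3: "lead_coeff C1 = 1" unfolding C1_def n_def by (rule P_lc; use Suc in simp)
    have dg3: "degree C1 = k'" unfolding C1_def n_def using Suc by (simp add: P_deg)
    have "b1 - b2 = 0 \<and> g1 - g2 = 0 \<and> d1 = 0"
      by (rule indep3[OF Z lc lc3]) (use dg dg3 Suc in simp_all)
    then show ?thesis by simp
  qed
  then have "b2 = b1" "g2 = g1" "1 \<le> k \<longrightarrow> d1 = 0" by auto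
  then show ?thesis unfolding b1_def g1_def d1_def b2_def g2_def n_def by blast
qed


lemma main_k:
  shows "(\<forall>n. beta \<mu>1 \<mu>2 (k+1) (2*n+k) = beta \<mu>1 \<mu>2 k (2*n+k) + cc \<mu>1 \<mu>2 k n)
   \<and> (\<forall>n\<ge>1. gamma \<mu>1 \<mu>2 (k+1) (2*n+k) = gamma \<mu>1 \<mu>2 k (2*n+k))
   \<and> (\<forall>n\<ge>1. delta \<mu>1 \<mu>2 (k+1) (2*n+k) =
              delta \<mu>1 \<mu>2 k (2*n+k) + cc \<mu>1 \<mu>2 k (n-1) * gamma \<mu>1 \<mu>2 k (2*n+k))
   \<and> (\<forall>n. beta \<mu>1 \<mu>2 (k+1) (2*n+k+1) = beta \<mu>1 \<mu>2 k (2*n+k+1) - cc \<mu>1 \<mu>2 k n)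
   \<and> (\<forall>n. gamma \<mu>1 \<mu>2 (k+1) (2*n+k+1) = gamma \<mu>1 \<mu>2 k (2*n+k+1)
              - cc \<mu>1 \<mu>2 k n * (beta \<mu>1 \<mu>2 k (2*n+k) - beta \<mu>1 \<mu>2 (k+1) (2*n+k+1)))
   \<and> (\<forall>n\<ge>1. delta \<mu>1 \<mu>2 (k+1) (2*n+k+1) =
              delta \<mu>1 \<mu>2 k (2*n+k+1) - cc \<mu>1 \<mu>2 k n * gamma \<mu>1 \<mu>2 k (2*n+k))
   \<and> (\<forall>n\<ge>1. cc \<mu>1 \<mu>2 k n = cc \<mu>1 \<mu>2 k (n-1) * delta \<mu>1 \<mu>2 k (2*n+k+1)
              / (delta \<mu>1 \<mu>2 k (2*n+k) + cc \<mu>1 \<mu>2 k (n-1) * gamma \<mu>1 \<mu>2 k (2*n+k)))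
   \<and> (k \<ge> 1 \<longrightarrow> cc \<mu>1 \<mu>2 k 0 = delta \<mu>1 \<mu>2 k (k+1) / gamma \<mu>1 \<mu>2 k k)"
proof (intro conjI allI impI)
  fix n :: nat
  show "beta \<mu>1 \<mu>2 (k+1) (2*n+k) = beta \<mu>1 \<mu>2 k (2*n+k) + cc \<mu>1 \<mu>2 k n"
  proof (cases "n = 0")
    case True then show ?thesis using beta_special[of k] by simp
  next
    case False then show ?thesis using even_vals[of n k] by simp
  qed
next
  fix n :: nat assume "1 \<le> n"
  then show "gamma \<mu>1 \<mu>2 (k+1) (2*n+k) = gamma \<mu>1 \<mu>2 k (2*n+k)" using even_vals[of n k] by simp
next
  fix n :: nat assume "1 \<le> n"
  then show "delta \<mu>1 \<mu>2 (k+1) (2*n+k) =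
              delta \<mu>1 \<mu>2 k (2*n+k) + cc \<mu>1 \<mu>2 k (n-1) * gamma \<mu>1 \<mu>2 k (2*n+k)"
    using even_vals[of n k] by simp
next
  fix n :: nat
  have "beta \<mu>1 \<mu>2 (k+1) (2*n+k+1) = bo k n - cc \<mu>1 \<mu>2 k n
    \<and> gamma \<mu>1 \<mu>2 (k+1) (2*n+k+1) = go k n - cc \<mu>1 \<mu>2 k n * (be k n - (bo k n - cc \<mu>1 \<mu>2 k n))"
  proof (cases "n = 0")
    case True then show ?thesis using odd_zero[of k] by simp
  next
    case False then show ?thesis using odd_pos[of n k] by simp
  qed
  then show "beta \<mu>1 \<mu>2 (k+1) (2*n+k+1) = beta \<mu>1 \<mu>2 k (2*n+k+1) - cc \<mu>1 \<mu>2 k n"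
    "gamma \<mu>1 \<mu>2 (k+1) (2*n+k+1) = gamma \<mu>1 \<mu>2 k (2*n+k+1)
              - cc \<mu>1 \<mu>2 k n * (beta \<mu>1 \<mu>2 k (2*n+k) - beta \<mu>1 \<mu>2 (k+1) (2*n+k+1))"
    by auto
next
  fix n :: nat assume "1 \<le> n"
  then show "delta \<mu>1 \<mu>2 (k+1) (2*n+k+1) =
              delta \<mu>1 \<mu>2 k (2*n+k+1) - cc \<mu>1 \<mu>2 k n * gamma \<mu>1 \<mu>2 k (2*n+k)"
    using odd_pos[of n k] by simp
next
  fix n :: nat assume n1: "1 \<le> n"
  have e: "(do k n - cc \<mu>1 \<mu>2 k n * ge k n) * cc \<mu>1 \<mu>2 k (n-1) - cc \<mu>1 \<mu>2 k n * de k n = 0"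
    using odd_pos[OF n1, of k] by blast
  have nz: "de k n + cc \<mu>1 \<mu>2 k (n-1) * ge k n \<noteq> 0" by (rule deltap_nz[OF n1])
  have "cc \<mu>1 \<mu>2 k n * (de k n + cc \<mu>1 \<mu>2 k (n-1) * ge k n) = cc \<mu>1 \<mu>2 k (n-1) * do k n"
    using e by (simp add: algebra_simps)
  then show "cc \<mu>1 \<mu>2 k n = cc \<mu>1 \<mu>2 k (n-1) * delta \<mu>1 \<mu>2 k (2*n+k+1)
              / (delta \<mu>1 \<mu>2 k (2*n+k) + cc \<mu>1 \<mu>2 k (n-1) * gamma \<mu>1 \<mu>2 k (2*n+k))"
    using nz by (simp add: eq_divide_eq)
next
  assume k1: "1 \<le> k"
  have "do k 0 - cc \<mu>1 \<mu>2 k 0 * ge k 0 = 0" using odd_zero[of k] k1 by blast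
  moreover have "ge k 0 \<noteq> 0" by (rule ge0_nz[OF k1])
  ultimately show "cc \<mu>1 \<mu>2 k 0 = delta \<mu>1 \<mu>2 k (k+1) / gamma \<mu>1 \<mu>2 k k"
    by (simp add: eq_divide_eq)
qed

end

theorem theorem2p2:
  fixes \<mu>1 \<mu>2 :: "real measure"
  assumes "sets \<mu>1 = sets borel" and "sets \<mu>2 = sets borel"
    and "moments_finite \<mu>1" and "moments_finite \<mu>2"
    and "normal_system \<mu>1 \<mu>2"
  shows "\<forall>k::nat.
     (\<forall>n. beta \<mu>1 \<mu>2 (k+1) (2*n+k) = beta \<mu>1 \<mu>2 k (2*n+k) + cc \<mu>1 \<mu>2 k n)
   \<and> (\<forall>n\<ge>1. gamma \<mu>1 \<mu>2 (k+1) (2*n+k) = gamma \<mu>1 \<mu>2 k (2*n+k))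
   \<and> (\<forall>n\<ge>1. delta \<mu>1 \<mu>2 (k+1) (2*n+k) =
              delta \<mu>1 \<mu>2 k (2*n+k) + cc \<mu>1 \<mu>2 k (n-1) * gamma \<mu>1 \<mu>2 k (2*n+k))
   \<and> (\<forall>n. beta \<mu>1 \<mu>2 (k+1) (2*n+k+1) = beta \<mu>1 \<mu>2 k (2*n+k+1) - cc \<mu>1 \<mu>2 k n)
   \<and> (\<forall>n. gamma \<mu>1 \<mu>2 (k+1) (2*n+k+1) = gamma \<mu>1 \<mu>2 k (2*n+k+1)
              - cc \<mu>1 \<mu>2 k n * (beta \<mu>1 \<mu>2 k (2*n+k) - beta \<mu>1 \<mu>2 (k+1) (2*n+k+1)))
   \<and> (\<forall>n\<ge>1. delta \<mu>1 \<mu>2 (k+1) (2*n+k+1) =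
              delta \<mu>1 \<mu>2 k (2*n+k+1) - cc \<mu>1 \<mu>2 k n * gamma \<mu>1 \<mu>2 k (2*n+k))
   \<and> (\<forall>n\<ge>1. cc \<mu>1 \<mu>2 k n = cc \<mu>1 \<mu>2 k (n-1) * delta \<mu>1 \<mu>2 k (2*n+k+1)
              / (delta \<mu>1 \<mu>2 k (2*n+k) + cc \<mu>1 \<mu>2 k (n-1) * gamma \<mu>1 \<mu>2 k (2*n+k)))
   \<and> (k \<ge> 1 \<longrightarrow> cc \<mu>1 \<mu>2 k 0 = delta \<mu>1 \<mu>2 k (k+1) / gamma \<mu>1 \<mu>2 k k)"
proof -
  interpret ms \<mu>1 \<mu>2 by unfold_locales (use assms in auto)
  show ?thesis using main_k by blast
qed

end
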